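(* Let $p$ be a prime and let $a,b$ be integers, both coprime to $p$, with $a\neq 1$. For each $n\geq 1$, let $x_n$ denote the smallest positive integer satisfying $a^{x_n}\equiv b \pmod{p^n}$, when one exists. If $x_n$ exists for every $n\geq 1$, then the sequence $(x_n)_{n\geq 1}$ converges in the ring $\mathbb{Z}_p$ of $p$-adic integers, that is, with respect to the $p$-adic absolute value.
   Context: $\mathbb{Z}_p$ denotes the ring of $p$-adic integers, i.e. the completion of $\mathbb{Z}$ with respect to the $p$-adic metric $d(x,y)=e^{-v_p(x-y)}$. Here $v_p$ is the $p$-adic valuation. *)

theory Defs
  imports "HOL-Number_Theory.Number_Theory"
begin

definition min_exp :: "int \<Rightarrow> int \<Rightarrow> nat \<Rightarrow> nat \<Rightarrow> nat" where
  "min_exp a b p n = (LEAST x::nat. 0 < x \<and> [a ^ x = b] (mod (int p ^ n)))"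

text \<open>Convergence in Z_p of an integer sequence: since Z_p is the completion of Z
  for the p-adic metric, a sequence of integers converges in Z_p iff it is Cauchy
  for that metric, i.e. for every k, eventually all terms agree modulo p^k.\<close>
definition padic_convergent :: "nat \<Rightarrow> (nat \<Rightarrow> int) \<Rightarrow> bool" where
  "padic_convergent p x \<longleftrightarrow>
     (\<forall>k::nat. \<exists>N. \<forall>m\<ge>N. \<forall>n\<ge>N. (int p ^ k) dvd (x m - x n))"

end

theory Submission imports Defs begin

lemma exp_gcd_cong:
  fixes a m :: int
  assumes "[a ^ d = 1] (mod m)" "[a ^ e = 1] (mod m)"
  shows "[a ^ gcd d e = 1] (mod m)"
proof (cases "d = 0")
  case True then show ?thesis using assms by simp
next
  case False
  then obtain x y where xy: "d * x = e * y + gcd d e" using bezout_nat by blast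
  have "[a ^ (d * x) = 1] (mod m)"
    using cong_pow[OF assms(1), of x] by (simp add: power_mult)
  moreover have "a ^ (d * x) = (a ^ e) ^ y * a ^ gcd d e"
    by (simp add: xy power_add power_mult)
  moreover have "[(a ^ e) ^ y * a ^ gcd d e = 1 * a ^ gcd d e] (mod m)"
    using cong_pow[OF assms(2), of y] by (intro cong_mult) auto
  ultimately show ?thesis
    by (metis cong_sym cong_trans mult_1)
qed

lemma exp_cancel_cong:
  fixes a m :: int
  assumes "coprime a m" "[a ^ i = a ^ j] (mod m)" "i \<le> j"
  shows "[a ^ (j - i) = 1] (mod m)"
proof -
  have "a ^ j = a ^ i * a ^ (j - i)" using assms(3) by (simp flip: power_add)
  then have "[a ^ i * a ^ (j - i) = a ^ i * 1] (mod m)" using assms(2)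
    by (simp add: cong_sym)
  moreover have "coprime (a ^ i) m" using assms(1) by simp
  ultimately show ?thesis using cong_mult_lcancel[of "a ^ i" m]
    by (metis mult.right_neutral)
qed

lemma euler_int:
  fixes a :: int and m :: nat
  assumes "coprime a (int m)" "m > 0"
  shows "[a ^ totient m = 1] (mod int m)"
proof -
  define c where "c = nat (a mod int m)"
  have c: "int c = a mod int m" using assms(2) by (simp add: c_def)
  have "coprime (int c) (int m)" using assms(1) c
    by (metis coprime_commute coprime_mod_left_iff less_irrefl of_nat_0_less_iff assms(2) not_gr0 of_nat_eq_0_iff)
  then have "coprime c m" by simp
  then have "[c ^ totient m = 1] (mod m)" by (rule euler_theorem)
  then have "[int c ^ totient m = 1] (mod int m)"
    by (metis cong_int_iff of_nat_1 of_nat_power)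
  moreover have "[int c = a] (mod int m)" using c by (simp add: cong_def)
  ultimately show ?thesis
    by (meson cong_pow cong_sym cong_trans)
qed

lemma key_D:
  fixes p k :: nat and a :: int
  assumes p: "prime p" and cop: "coprime a (int p)" and a1: "a \<noteq> 1" and am1: "a \<noteq> -1"
  shows "\<exists>n\<ge>1. \<forall>d. [a ^ d = 1] (mod (int p ^ n)) \<longrightarrow> p ^ k dvd d"
proof (cases "k = 0")
  case True then show ?thesis by auto
next
  case False
  have p2: "p \<ge> 2" using p prime_ge_2_nat by blast
  define M where "M = p ^ (k - 1) * (p - 1)"
  have M0: "M > 0" using p2 by (simp add: M_def)
  have a0: "a \<noteq> 0" using cop p2 by auto
  have abs_a: "\<bar>a\<bar> \<ge> 2" using a0 a1 am1 by linarith
  have "\<bar>a ^ M\<bar> \<ge> \<bar>a\<bar>"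
  proof -
    have "\<bar>a\<bar> ^ 1 \<le> \<bar>a\<bar> ^ M" using M0 abs_a by (intro power_increasing) auto
    then show ?thesis by (simp add: power_abs)
  qed
  then have aM: "a ^ M - 1 \<noteq> 0" using abs_a by auto
  define n where "n = nat \<bar>a ^ M - 1\<bar> + k + 1"
  have n1: "n \<ge> 1" "n - 1 \<ge> k" "n > 0" by (auto simp: n_def)
  have "int n < 2 ^ n" using less_exp[of n] by (metis of_nat_less_iff of_nat_numeral of_nat_power)
  also have "(2::int) ^ n \<le> int p ^ n" using p2 by (intro power_mono) auto
  finally have big: "\<bar>a ^ M - 1\<bar> < int p ^ n" by (simp add: n_def)
  have notM: "\<not> [a ^ M = 1] (mod (int p ^ n))"
  proof
    assume "[a ^ M = 1] (mod (int p ^ n))"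
    then have "int p ^ n dvd a ^ M - 1" by (simp add: cong_iff_dvd_diff)
    then have "\<bar>int p ^ n\<bar> \<le> \<bar>a ^ M - 1\<bar>" using aM dvd_imp_le_int by blast
    then show False using big by simp
  qed
  have "\<forall>d. [a ^ d = 1] (mod (int p ^ n)) \<longrightarrow> p ^ k dvd d"
  proof (intro allI impI)
    fix d assume hd: "[a ^ d = 1] (mod (int p ^ n))"
    show "p ^ k dvd d"
    proof (rule ccontr)
      assume nd: "\<not> p ^ k dvd d"
      define E where "E = p ^ (n - 1) * (p - 1)"
      have "totient (p ^ n) = E" using p n1 by (simp add: E_def totient_prime_power)
      moreover have "coprime a (int (p ^ n))" using cop by simp
      ultimately have hE: "[a ^ E = 1] (mod (int p ^ n))"
        using euler_int[of a "p ^ n"] p2 by simp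
      define g where "g = gcd d E"
      have hg: "[a ^ g = 1] (mod (int p ^ n))" unfolding g_def using exp_gcd_cong[OF hd hE] .
      obtain j where j: "j \<le> n - 1" "gcd d (p ^ (n - 1)) = p ^ j"
        using divides_primepow_nat[OF p, of "gcd d (p ^ (n - 1))" "n - 1"] by auto
      have "p ^ j dvd d" using j(2) by (metis gcd_dvd1)
      then have "j < k" using nd
        by (metis not_less power_le_dvd)
      have "g dvd gcd (d * (p - 1)) (p ^ (n - 1) * (p - 1))"
        unfolding g_def E_def by (intro gcd_greatest) (auto intro: dvd_mult2)
      also have "\<dots> = gcd d (p ^ (n - 1)) * (p - 1)"
        by (metis gcd_mult_distrib_nat mult.commute)
      also have "\<dots> = p ^ j * (p - 1)" using j by simp
      also have "\<dots> dvd M" unfolding M_def using \<open>j < k\<close>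
        by (intro mult_dvd_mono) (auto intro: le_imp_power_dvd)
      finally have "g dvd M" .
      then obtain q where "M = g * q" by blast
      then have "[a ^ M = 1 ^ q] (mod (int p ^ n))"
        using cong_pow[OF hg, of q] by (simp add: power_mult)
      then show False using notM by simp
    qed
  qed
  then show ?thesis using n1 by blast
qed

lemma min_exp_prop:
  assumes "\<exists>x::nat. 0 < x \<and> [a ^ x = b] (mod (int p ^ n))"
  shows "0 < min_exp a b p n \<and> [a ^ min_exp a b p n = b] (mod (int p ^ n))"
  unfolding min_exp_def using LeastI_ex[OF assms] .

lemma min_exp_le:
  assumes "0 < x" "[a ^ x = b] (mod (int p ^ n))"
  shows "min_exp a b p n \<le> x"
  unfolding min_exp_def using assms by (intro Least_le) auto

theorem mainTheorem1:
  fixes p :: nat and a b :: int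
  assumes "prime p"
    and "coprime a (int p)" and "coprime b (int p)"
    and "a \<noteq> 1"
    and "\<forall>n\<ge>1. \<exists>x::nat. 0 < x \<and> [a ^ x = b] (mod (int p ^ n))"
  shows "padic_convergent p (\<lambda>n. int (min_exp a b p n))"
  unfolding padic_convergent_def
proof
  fix k :: nat
  define x where "x = (\<lambda>n. min_exp a b p n)"
  have hx: "\<And>n. n \<ge> 1 \<Longrightarrow> 0 < x n \<and> [a ^ x n = b] (mod (int p ^ n))"
    unfolding x_def using assms(5) min_exp_prop by blast
  have p2: "p \<ge> 2" using assms(1) prime_ge_2_nat by blast
  have red: "\<And>m n. n \<le> m \<Longrightarrow> 1 \<le> n \<Longrightarrow> [a ^ x m = a ^ x n] (mod (int p ^ n))"
  proof -
    fix m n :: nat assume "n \<le> m" "1 \<le> n"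
    then have "[a ^ x m = b] (mod (int p ^ n))"
      using hx[of m] cong_dvd_modulus[of _ _ "int p ^ m" "int p ^ n"]
      by (meson le_imp_power_dvd order_trans)
    then show "[a ^ x m = a ^ x n] (mod (int p ^ n))"
      using hx[of n] \<open>1 \<le> n\<close> by (meson cong_sym cong_trans)
  qed
  show "\<exists>N. \<forall>m\<ge>N. \<forall>n\<ge>N. int p ^ k dvd int (x m) - int (x n)"
  proof (cases "a = -1")
    case True
    have le2: "\<And>n. n \<ge> 1 \<Longrightarrow> x n \<le> 2"
    proof -
      fix n :: nat assume n: "n \<ge> 1"
      then obtain y where y: "0 < y" "[a ^ y = b] (mod (int p ^ n))" using assms(5) by blast
      show "x n \<le> 2"
      proof (cases "even y")
        case True
        then have "[a ^ 2 = b] (mod (int p ^ n))" using y \<open>a = -1\<close> by simp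
        then show ?thesis unfolding x_def by (rule min_exp_le[rotated]) auto
      next
        case False
        then have "[a ^ 1 = b] (mod (int p ^ n))" using y \<open>a = -1\<close> by simp
        then have "x n \<le> 1" unfolding x_def by (rule min_exp_le[rotated]) auto
        then show ?thesis by simp
      qed
    qed
    have "\<forall>m\<ge>2. \<forall>n\<ge>2. x m = x n"
    proof (intro allI impI)
      fix m n :: nat assume mn: "2 \<le> m" "2 \<le> n"
      have c1: "[a ^ x m = a ^ x 2] (mod (int p ^ 2))" using red[of 2 m] mn by simp
      have c2: "[a ^ x n = a ^ x 2] (mod (int p ^ 2))" using red[of 2 n] mn by simp
      have c: "[a ^ x m = a ^ x n] (mod (int p ^ 2))" using c1 c2 by (meson cong_sym cong_trans)
      have r1: "0 < x m" "x m \<le> 2" using le2[of m] hx[of m] mn by auto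
      have r2: "0 < x n" "x n \<le> 2" using le2[of n] hx[of n] mn by auto
      have r: "x m = 1 \<or> x m = 2" "x n = 1 \<or> x n = 2" using r1 r2 by linarith+
      have "(2::int) ^ 2 \<le> int p ^ 2" using p2 by (intro power_mono) auto
      then have p4: "int p ^ 2 \<ge> 4" by simp
      show "x m = x n"
      proof (rule ccontr)
        assume ne: "x m \<noteq> x n"
        have "[-1 = 1::int] (mod (int p ^ 2))"
          using c r ne True by (auto simp: cong_sym)
        then have "int p ^ 2 dvd 2" by (simp add: cong_iff_dvd_diff)
        then have "int p ^ 2 \<le> 2" by (simp add: zdvd_imp_le)
        then show False using p4 by simp
      qed
    qed
    then have "\<forall>m\<ge>2. \<forall>n\<ge>2. int p ^ k dvd int (x m) - int (x n)"
      by (metis diff_self dvd_0_right)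
    then show ?thesis by blast
  next
    case False
    obtain N where N: "N \<ge> 1" "\<forall>d. [a ^ d = 1] (mod (int p ^ N)) \<longrightarrow> p ^ k dvd d"
      using key_D[OF assms(1) assms(2) assms(4) False] by blast
    have cop: "coprime a (int p ^ N)" using assms(2) by simp
    have "\<forall>m\<ge>N. \<forall>n\<ge>N. int p ^ k dvd int (x m) - int (x n)"
    proof (intro allI impI)
      fix m n :: nat assume mn: "N \<le> m" "N \<le> n"
      have c: "[a ^ x m = a ^ x n] (mod (int p ^ N))"
        using red[of N m] red[of N n] mn N(1) by (meson cong_sym cong_trans)
      show "int p ^ k dvd int (x m) - int (x n)"
      proof (cases "x m \<le> x n")
        case True
        have "p ^ k dvd x n - x m" using N(2) exp_cancel_cong[OF cop c True] by blast
        then have "int p ^ k dvd int (x n) - int (x m)" using True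
          by (metis of_nat_diff of_nat_dvd_iff of_nat_power)
        then show ?thesis by (metis dvd_minus_iff minus_diff_eq)
      next
        case False
        then have le: "x n \<le> x m" by simp
        have "p ^ k dvd x m - x n" using N(2) exp_cancel_cong[OF cop cong_sym[OF c] le] by blast
        then show ?thesis using le
          by (metis of_nat_diff of_nat_dvd_iff of_nat_power)
      qed
    qed
    then show ?thesis by blast
  qed
qed

end
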